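(* For any group $B$ and any integer $p\ge 2$, $$cw(B\wr C_p)\le\max(1,cw(B)).$$
   Context: $B\wr C_p=B^p\rtimes C_p$ is the wreath product with $C_p$ acting on $\{1,\dots,p\}$ by cyclic shifts. The commutator width $cw(G)$ of a group $G$ is the least $n$ such that every element of the derived subgroup $G'$ is a product of at most $n$ commutators $[x,y]=xyx^{-1}y^{-1}$ ($cw(G)=\infty$ if no such $n$ exists). *)

theory Defs
  imports "HOL-Algebra.Generated_Groups" "HOL-Library.FuncSet" "HOL-Library.Extended_Nat"
begin

definition commutator :: "('a, 'b) monoid_scheme \<Rightarrow> 'a \<Rightarrow> 'a \<Rightarrow> 'a" where
  "commutator G x y = x \<otimes>\<^bsub>G\<^esub> y \<otimes>\<^bsub>G\<^esub> inv\<^bsub>G\<^esub> x \<otimes>\<^bsub>G\<^esub> inv\<^bsub>G\<^esub> y"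

definition comm_prod :: "('a, 'b) monoid_scheme \<Rightarrow> ('a \<times> 'a) list \<Rightarrow> 'a" where
  "comm_prod G cs = foldr (\<lambda>(x, y) acc. commutator G x y \<otimes>\<^bsub>G\<^esub> acc) cs \<one>\<^bsub>G\<^esub>"

definition prod_of_comms :: "('a, 'b) monoid_scheme \<Rightarrow> nat \<Rightarrow> 'a \<Rightarrow> bool" where
  "prod_of_comms G n g \<longleftrightarrow>
     (\<exists>cs. length cs \<le> n \<and> set cs \<subseteq> carrier G \<times> carrier G \<and> g = comm_prod G cs)"

text \<open>Commutator width; infinity if no bound exists. The derived subgroup G' is
  the library's derived G (carrier G), the subgroup generated by all commutators.\<close>
definition comm_width :: "('a, 'b) monoid_scheme \<Rightarrow> enat" where
  "comm_width G = Inf {enat n | n. \<forall>g \<in> derived G (carrier G). prod_of_comms G n g}"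

text \<open>Elements (f, i) with f : {0..<p} \<rightarrow> B
  (extensional) and i \<in> Z/p; C_p acts by cyclic shift of coordinates:
  (i . g)(k) = g(k - i mod p).  (f,i)(g,j) = (f \<cdot> (i . g), i + j mod p).\<close>
definition wreath_mult :: "('a, 'b) monoid_scheme \<Rightarrow> nat \<Rightarrow>
    (nat \<Rightarrow> 'a) \<times> nat \<Rightarrow> (nat \<Rightarrow> 'a) \<times> nat \<Rightarrow> (nat \<Rightarrow> 'a) \<times> nat" where
  "wreath_mult B p x y =
     ((\<lambda>k. if k < p then fst x k \<otimes>\<^bsub>B\<^esub> fst y ((k + p - snd x) mod p) else undefined),
      (snd x + snd y) mod p)"

definition wreath_Cp :: "('a, 'b) monoid_scheme \<Rightarrow> nat \<Rightarrow> ((nat \<Rightarrow> 'a) \<times> nat) monoid" where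
  "wreath_Cp B p =
    \<lparr> carrier = ({0..<p} \<rightarrow>\<^sub>E carrier B) \<times> {0..<p},
      mult = wreath_mult B p,
      one = ((\<lambda>k. if k < p then \<one>\<^bsub>B\<^esub> else undefined), 0) \<rparr>"

end

theory Submission imports Defs "HOL-Algebra.FiniteProduct" begin

lemma mod_lt2: "(a::nat) < 2*p \<Longrightarrow> a mod p = (if a < p then a else a - p)"
  by (metis le_mod_geq mod_less mult_2 not_le diff_less_mono add_diff_cancel_left')

primrec oprod :: "('a, 'b) monoid_scheme \<Rightarrow> (nat \<Rightarrow> 'a) \<Rightarrow> nat \<Rightarrow> 'a" where
  "oprod G f 0 = \<one>\<^bsub>G\<^esub>"
| "oprod G f (Suc n) = oprod G f n \<otimes>\<^bsub>G\<^esub> f n"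

lemma comm_comm_one: "comm_group G \<Longrightarrow> a \<in> carrier G \<Longrightarrow> b \<in> carrier G \<Longrightarrow>
   a \<otimes>\<^bsub>G\<^esub> b \<otimes>\<^bsub>G\<^esub> inv\<^bsub>G\<^esub> a \<otimes>\<^bsub>G\<^esub> inv\<^bsub>G\<^esub> b = \<one>\<^bsub>G\<^esub>"
proof -
  assume a: "comm_group G" "a \<in> carrier G" "b \<in> carrier G"
  interpret comm_group G by (rule a(1))
  show ?thesis using a by (simp add: m_lcomm[of b "inv\<^bsub>G\<^esub> a"] m_assoc)
qed

lemma comm_prod_Nil: "comm_prod G [] = \<one>\<^bsub>G\<^esub>" by (simp add: comm_prod_def)
lemma comm_prod_Cons: "comm_prod G ((x, y) # cs) = commutator G x y \<otimes>\<^bsub>G\<^esub> comm_prod G cs"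
  by (simp add: comm_prod_def)

lemma oprod_cong: "\<forall>k<n. f k = g k \<Longrightarrow> oprod G f n = oprod G g n"
  by (induction n) auto

locale wr = group B for B :: "('a,'b) monoid_scheme" (structure) +
  fixes p :: nat assumes p2: "2 \<le> p"
begin

abbreviation W where "W \<equiv> wreath_Cp B p"

definition sh :: "nat \<Rightarrow> nat \<Rightarrow> nat" where "sh i k = (k + p - i) mod p"

lemma sh_eq: "i < p \<Longrightarrow> k < p \<Longrightarrow> sh i k = (if i \<le> k then k - i else k + p - i)"
  unfolding sh_def by (subst mod_lt2) auto

lemma sh_lt: "0 < p \<Longrightarrow> sh i k < p" unfolding sh_def by simp

lemma sh_comp: "i < p \<Longrightarrow> j < p \<Longrightarrow> k < p \<Longrightarrow> sh j (sh i k) = sh ((i + j) mod p) k"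
  using p2 by (simp add: sh_eq mod_lt2 sh_lt)

lemma sh0: "k < p \<Longrightarrow> sh 0 k = k" using p2 by (simp add: sh_eq)

lemma sh_inv: "i < p \<Longrightarrow> k < p \<Longrightarrow> sh ((p - i) mod p) (sh i k) = k"
proof -
  assume a: "i < p" "k < p"
  have "(i + (p - i) mod p) mod p = 0" using a by (simp add: mod_add_right_eq)
  then show ?thesis using a p2 by (simp add: sh_comp sh0)
qed

lemma sh_bij: "i < p \<Longrightarrow> bij_betw (sh i) {0..<p} {0..<p}"
proof (rule bij_betw_byWitness[where f'="sh ((p - i) mod p)"])
  assume i: "i < p"
  have pp: "(p - (p - i) mod p) mod p = i"
  proof (cases "i = 0")
    case False then show ?thesis using i by simp
  qed simp
  have l: "(p - i) mod p < p" using p2 by simp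
  show "\<forall>a\<in>{0..<p}. sh ((p - i) mod p) (sh i a) = a" using i sh_inv by simp
  show "\<forall>a\<in>{0..<p}. sh i (sh ((p - i) mod p) a) = a" using sh_inv[OF l] pp by simp
  show "sh i ` {0..<p} \<subseteq> {0..<p}" using p2 sh_lt by auto
  show "sh ((p - i) mod p) ` {0..<p} \<subseteq> {0..<p}" using p2 sh_lt by auto
qed

lemma carW: "carrier W = ({0..<p} \<rightarrow>\<^sub>E carrier B) \<times> {0..<p}"
  by (simp add: wreath_Cp_def)

lemma multW: "(f, i) \<otimes>\<^bsub>W\<^esub> (g, j) = (\<lambda>k. if k < p then f k \<otimes> g (sh i k) else undefined, (i + j) mod p)"
  by (simp add: wreath_Cp_def wreath_mult_def sh_def fun_eq_iff)

lemma oneW: "\<one>\<^bsub>W\<^esub> = (\<lambda>k. if k < p then \<one> else undefined, 0)"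
  by (simp add: wreath_Cp_def)

lemma shp: "sh i k < p" using p2 sh_lt by simp

lemma memW: "(f, i) \<in> carrier W \<longleftrightarrow> (\<forall>k<p. f k \<in> carrier B) \<and> (\<forall>k. k \<ge> p \<longrightarrow> f k = undefined) \<and> i < p"
  by (auto simp: carW PiE_def Pi_def extensional_def)

definition invW where "invW x = (\<lambda>k. if k < p then inv (fst x (sh ((p - snd x) mod p) k)) else undefined, (p - snd x) mod p)"

lemma invW_car: "x \<in> carrier W \<Longrightarrow> invW x \<in> carrier W"
  using p2 by (cases x) (auto simp: memW invW_def shp)

lemma invW_l: "x \<in> carrier W \<Longrightarrow> invW x \<otimes>\<^bsub>W\<^esub> x = \<one>\<^bsub>W\<^esub>"
proof (cases x)
  case (Pair f i)
  assume "x \<in> carrier W"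
  then have f: "\<forall>k<p. f k \<in> carrier B" "i < p" using Pair memW by auto
  have "((p - i) mod p + i) mod p = 0" using f(2) by (simp add: mod_add_left_eq)
  then show ?thesis using Pair f by (auto simp: invW_def multW oneW shp fun_eq_iff)
qed

lemma closedW: "x \<in> carrier W \<Longrightarrow> y \<in> carrier W \<Longrightarrow> x \<otimes>\<^bsub>W\<^esub> y \<in> carrier W"
  using p2 by (cases x; cases y) (auto simp: memW multW shp)

lemma assocW: "x \<in> carrier W \<Longrightarrow> y \<in> carrier W \<Longrightarrow> z \<in> carrier W \<Longrightarrow>
   (x \<otimes>\<^bsub>W\<^esub> y) \<otimes>\<^bsub>W\<^esub> z = x \<otimes>\<^bsub>W\<^esub> (y \<otimes>\<^bsub>W\<^esub> z)"
proof (cases x; cases y; cases z)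
  fix f i g j h l
  assume xyz: "x \<in> carrier W" "y \<in> carrier W" "z \<in> carrier W" and e: "x = (f, i)" "y = (g, j)" "z = (h, l)"
  then have c: "\<forall>k<p. f k \<in> carrier B" "i < p" "\<forall>k<p. g k \<in> carrier B" "j < p" "\<forall>k<p. h k \<in> carrier B" "l < p"
    using memW by auto
  have "((i + j) mod p + l) mod p = (i + (j + l) mod p) mod p"
    by (simp add: mod_add_left_eq mod_add_right_eq add.assoc)
  then show ?thesis using c unfolding e
    by (auto simp: multW fun_eq_iff shp sh_comp m_assoc)
qed

lemma oneW_car: "\<one>\<^bsub>W\<^esub> \<in> carrier W"
  using p2 by (simp add: oneW memW)

lemma l_oneW: "x \<in> carrier W \<Longrightarrow> \<one>\<^bsub>W\<^esub> \<otimes>\<^bsub>W\<^esub> x = x"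
  by (cases x) (auto simp: oneW multW memW sh0 fun_eq_iff)

lemma groupW: "group W"
  by (rule groupI) (auto intro: closedW oneW_car assocW l_oneW invW_car invW_l)

lemma invW_eq: "x \<in> carrier W \<Longrightarrow> inv\<^bsub>W\<^esub> x = invW x"
  using group.inv_equality[OF groupW invW_l] invW_car by blast

lemma snd_mult: "snd (x \<otimes>\<^bsub>W\<^esub> y) = (snd x + snd y) mod p"
  by (cases x; cases y) (simp add: multW)

lemma snd_inv: "x \<in> carrier W \<Longrightarrow> snd (inv\<^bsub>W\<^esub> x) = (p - snd x) mod p"
  by (simp add: invW_eq invW_def)

definition D where "D = derived B (carrier B)"
definition Q where "Q = B Mod D"
definition pr where "pr a = D #> a"
definition psi where "psi x = finprod Q (\<lambda>k. pr (fst x k)) {0..<p}"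

lemma QC: "comm_group Q" unfolding Q_def D_def by (rule derived_quot_is_comm_group)

lemma DN: "D \<lhd> B" unfolding D_def by (rule derived_self_is_normal)

lemma pr_hom: "pr \<in> hom B Q"
proof -
  have "pr = (\<lambda>a. D #> a)" by (simp add: pr_def fun_eq_iff)
  then show ?thesis using normal.r_coset_hom_Mod[OF DN] by (simp add: Q_def)
qed

lemma pr_mult: "a \<in> carrier B \<Longrightarrow> b \<in> carrier B \<Longrightarrow> pr (a \<otimes> b) = pr a \<otimes>\<^bsub>Q\<^esub> pr b"
  using pr_hom hom_mult by fastforce

lemma pr_car: "a \<in> carrier B \<Longrightarrow> pr a \<in> carrier Q"
  using pr_hom hom_in_carrier by fastforce

lemma psi_car: "x \<in> carrier W \<Longrightarrow> psi x \<in> carrier Q"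
proof -
  interpret Qg: comm_group Q by (rule QC)
  assume "x \<in> carrier W"
  then show ?thesis unfolding psi_def
    by (intro Qg.finprod_closed) (cases x, auto simp: memW pr_car)
qed

lemma psi_mult: "x \<in> carrier W \<Longrightarrow> y \<in> carrier W \<Longrightarrow> psi (x \<otimes>\<^bsub>W\<^esub> y) = psi x \<otimes>\<^bsub>Q\<^esub> psi y"
proof (cases x; cases y)
  interpret Qg: comm_group Q by (rule QC)
  fix f i g j
  assume xy: "x \<in> carrier W" "y \<in> carrier W" and e: "x = (f, i)" "y = (g, j)"
  then have c: "\<forall>k<p. f k \<in> carrier B" "i < p" "\<forall>k<p. g k \<in> carrier B" "j < p"
    using memW by auto
  have "psi (x \<otimes>\<^bsub>W\<^esub> y) = finprod Q (\<lambda>k. pr (f k) \<otimes>\<^bsub>Q\<^esub> pr (g (sh i k))) {0..<p}"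
    unfolding psi_def e multW
    by (rule Qg.finprod_cong') (use c in \<open>auto simp: pr_mult shp pr_car\<close>)
  also have "\<dots> = psi x \<otimes>\<^bsub>Q\<^esub> finprod Q (\<lambda>k. pr (g (sh i k))) {0..<p}"
    unfolding psi_def e using c by (subst Qg.finprod_multf) (auto simp: pr_car shp)
  also have "finprod Q (\<lambda>k. pr (g (sh i k))) {0..<p} = finprod Q (\<lambda>k. pr (g k)) (sh i ` {0..<p})"
    by (rule Qg.finprod_reindex[symmetric]) (use c sh_bij in \<open>auto simp: pr_car shp bij_betw_def\<close>)
  also have "sh i ` {0..<p} = {0..<p}" using sh_bij[OF c(2)] by (simp add: bij_betw_def)
  finally show ?thesis unfolding psi_def e by simp
qed

lemma psi_one: "psi \<one>\<^bsub>W\<^esub> = \<one>\<^bsub>Q\<^esub>"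
proof -
  interpret Qg: comm_group Q by (rule QC)
  have "pr \<one> = \<one>\<^bsub>Q\<^esub>" using hom_one[OF pr_hom] is_group Qg.is_group by simp
  then have "psi \<one>\<^bsub>W\<^esub> = finprod Q (\<lambda>k. \<one>\<^bsub>Q\<^esub>) {0..<p}"
    unfolding psi_def oneW by (intro Qg.finprod_cong') auto
  then show ?thesis by simp
qed

lemma psi_inv: "x \<in> carrier W \<Longrightarrow> psi (inv\<^bsub>W\<^esub> x) = inv\<^bsub>Q\<^esub> psi x"
proof -
  interpret Qg: comm_group Q by (rule QC)
  interpret Wg: group W by (rule groupW)
  assume x: "x \<in> carrier W"
  have "psi (inv\<^bsub>W\<^esub> x) \<otimes>\<^bsub>Q\<^esub> psi x = \<one>\<^bsub>Q\<^esub>"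
    using x by (simp add: psi_mult[symmetric] psi_one)
  then show ?thesis using x by (intro Qg.inv_equality[symmetric]) (auto simp: psi_car)
qed

definition S where "S = {x \<in> carrier W. snd x = 0 \<and> psi x = \<one>\<^bsub>Q\<^esub>}"

lemma S_sub: "subgroup S W"
proof -
  interpret Qg: comm_group Q by (rule QC)
  interpret Wg: group W by (rule groupW)
  show ?thesis
  proof (rule Wg.subgroupI)
    show "S \<subseteq> carrier W" by (auto simp: S_def)
    show "S \<noteq> {}" using psi_one Wg.one_closed by (auto simp: S_def oneW)
    show "inv\<^bsub>W\<^esub> a \<in> S" if "a \<in> S" for a
      using that by (auto simp: S_def psi_inv snd_inv)
    show "a \<otimes>\<^bsub>W\<^esub> b \<in> S" if "a \<in> S" "b \<in> S" for a b
      using that by (auto simp: S_def psi_mult snd_mult)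
  qed
qed

lemma derived_S: "derived W (carrier W) \<subseteq> S"
proof -
  interpret Qg: comm_group Q by (rule QC)
  interpret Wg: group W by (rule groupW)
  have "derived_set W (carrier W) \<subseteq> S"
  proof (clarsimp)
    fix x y assume xy: "x \<in> carrier W" "y \<in> carrier W"
    have sx: "snd x < p" "snd y < p" using xy by (auto simp: carW)
    have "((snd x + snd y) mod p + (p - snd x) mod p) mod p = (snd x + snd y + (p - snd x)) mod p"
      by (simp add: mod_add_left_eq mod_add_right_eq)
    also have "\<dots> = snd y mod p" using sx by simp
    finally have e1: "((snd x + snd y) mod p + (p - snd x) mod p) mod p = snd y" using sx by simp
    have "((snd y) + (p - snd y) mod p) mod p = 0" using sx by (simp add: mod_add_right_eq)
    with e1 have "snd (x \<otimes>\<^bsub>W\<^esub> y \<otimes>\<^bsub>W\<^esub> inv\<^bsub>W\<^esub> x \<otimes>\<^bsub>W\<^esub> inv\<^bsub>W\<^esub> y) = 0"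
      using xy by (simp add: snd_mult snd_inv)
    moreover have "psi (x \<otimes>\<^bsub>W\<^esub> y \<otimes>\<^bsub>W\<^esub> inv\<^bsub>W\<^esub> x \<otimes>\<^bsub>W\<^esub> inv\<^bsub>W\<^esub> y) = \<one>\<^bsub>Q\<^esub>"
      using xy by (simp add: psi_mult psi_inv psi_car comm_comm_one[OF QC])
    ultimately show "x \<otimes>\<^bsub>W\<^esub> y \<otimes>\<^bsub>W\<^esub> inv\<^bsub>W\<^esub> x \<otimes>\<^bsub>W\<^esub> inv\<^bsub>W\<^esub> y \<in> S"
      using xy by (simp add: S_def)
  qed
  then show ?thesis unfolding derived_def using Wg.generate_subgroup_incl S_sub by blast
qed

lemma pr_oprod: "\<forall>k<n. f k \<in> carrier B \<Longrightarrow> oprod B f n \<in> carrier B \<and> pr (oprod B f n) = finprod Q (\<lambda>k. pr (f k)) {..<n}"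
proof (induction n)
  interpret Qg: comm_group Q by (rule QC)
  case 0
  then show ?case using hom_one[OF pr_hom] is_group Qg.is_group by simp
next
  interpret Qg: comm_group Q by (rule QC)
  case (Suc n)
  then show ?case using Suc by (auto simp: lessThan_Suc pr_mult pr_car Qg.m_comm)
qed

lemma S_oprod: "(f, i) \<in> S \<Longrightarrow> i = 0 \<and> oprod B f p \<in> D"
proof -
  assume a: "(f, i) \<in> S"
  then have c: "\<forall>k<p. f k \<in> carrier B" using memW S_def by auto
  have "pr (oprod B f p) = \<one>\<^bsub>Q\<^esub>" using a pr_oprod[OF c]
    by (simp add: S_def psi_def atLeast0LessThan)
  then have "D #> oprod B f p = D" by (simp add: pr_def Q_def)
  moreover have "subgroup D B" using DN normal_imp_subgroup by blast
  ultimately show ?thesis using a coset_join1 pr_oprod[OF c] by (auto simp: S_def)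
qed

lemma oprod_car: "\<forall>k<n. f k \<in> carrier B \<Longrightarrow> oprod B f n \<in> carrier B"
  by (induction n) auto

lemma oprod_Suc0: "\<forall>k\<le>n. f k \<in> carrier B \<Longrightarrow> oprod B f (Suc n) = f 0 \<otimes> oprod B (\<lambda>k. f (Suc k)) n"
proof (induction n)
  case 0 then show ?case by simp
next
  case (Suc n)
  have c: "\<forall>k<n. f (Suc k) \<in> carrier B" using Suc.prems by auto
  show ?case using Suc oprod_car[OF c] by (simp add: m_assoc)
qed

lemma comm_formula:
  assumes u: "(u, 1) \<in> carrier W" and v: "(v, 0) \<in> carrier W"
  shows "commutator W (u, 1) (v, 0) = (\<lambda>k. if k < p then u k \<otimes> v (sh 1 k) \<otimes> inv (u k) \<otimes> inv (v k) else undefined, 0)"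
proof -
  interpret Wg: group W by (rule groupW)
  have uc: "\<forall>k<p. u k \<in> carrier B" and vc: "\<forall>k<p. v k \<in> carrier B" using u v memW by auto
  have p1: "(p - 1) mod p = p - 1" "1 < p" using p2 by auto
  have s1: "k < p \<Longrightarrow> sh (p - 1) (sh 1 k) = k" for k using sh_inv[of 1 k] p1 by simp
  have "(1 + (p - 1)) mod p = 0" using p2 by simp
  then show ?thesis unfolding commutator_def using u v uc vc p1 s1
    by (simp add: invW_eq invW_def multW fun_eq_iff shp sh0)
qed

lemma key:
  assumes h: "\<forall>k<p. h k \<in> carrier B" "\<forall>k. k \<ge> p \<longrightarrow> h k = undefined"
    and a: "a \<in> carrier B" and b: "b \<in> carrier B"
    and hp: "oprod B h p = commutator B a b"
  shows "\<exists>X \<in> carrier W. \<exists>Y \<in> carrier W. commutator W X Y = (h, 0)"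
proof -
  define R where "R n = oprod B (\<lambda>k. h (Suc k)) n" for n
  have Rc: "R n \<in> carrier B" if "n < p" for n
    unfolding R_def by (rule oprod_car) (use h that in auto)
  define c where "c = R (p - 1) \<otimes> b"
  have cc: "c \<in> carrier B" using Rc b p2 by (simp add: c_def)
  define u where "u k = (if k < p then (if k = 0 then a else \<one>) else undefined)" for k
  define v where "v k = (if k < p then inv (R k) \<otimes> c else undefined)" for k
  have uW: "(u, 1) \<in> carrier W" using a p2 by (auto simp: memW u_def)
  have vW: "(v, 0) \<in> carrier W" using p2 Rc cc by (auto simp: memW v_def)
  have "(\<lambda>k. if k < p then u k \<otimes> v (sh 1 k) \<otimes> inv (u k) \<otimes> inv (v k) else undefined) = h"
  proof
    fix k
    show "(if k < p then u k \<otimes> v (sh 1 k) \<otimes> inv (u k) \<otimes> inv (v k) else undefined) = h k"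
    proof (cases "k < p")
      case False then show ?thesis using h by simp
    next
      case True
      show ?thesis
      proof (cases "k = 0")
        case k0: True
        have s: "sh 1 k = p - 1" using k0 p2 by (simp add: sh_eq)
        have vp: "v (p - 1) = b" using p2 Rc b by (simp add: v_def c_def m_assoc[symmetric])
        have v0: "v 0 = c" using p2 cc by (simp add: v_def R_def)
        have hp': "oprod B h p = h 0 \<otimes> R (p - 1)"
          using oprod_Suc0[of "p - 1" h] h p2 by (simp add: R_def)
        have "u k \<otimes> v (sh 1 k) \<otimes> inv (u k) \<otimes> inv (v k) = a \<otimes> b \<otimes> inv a \<otimes> inv c"
          using k0 s vp v0 p2 by (simp add: u_def)
        also have "\<dots> = commutator B a b \<otimes> inv (R (p - 1))"
          using a b Rc[of "p - 1"] p2 by (simp add: c_def commutator_def inv_mult_group m_assoc)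
        also have "\<dots> = h k"
        proof -
          have e: "commutator B a b = h 0 \<otimes> R (p - 1)" using hp hp' by simp
          have "h 0 \<in> carrier B" using h p2 by simp
          then show ?thesis unfolding e using k0 Rc[of "p - 1"] p2 by (simp add: m_assoc)
        qed
        finally show ?thesis using True by simp
      next
        case kn: False
        obtain j where j: "k = Suc j" using kn not0_implies_Suc by blast
        have s: "sh 1 k = j" using j True p2 by (simp add: sh_eq)
        have Rk: "R k = R j \<otimes> h k" using j by (simp add: R_def)
        have "u k \<otimes> v (sh 1 k) \<otimes> inv (u k) \<otimes> inv (v k) = inv (R j) \<otimes> c \<otimes> inv (inv (R k) \<otimes> c)"
          using True kn s j Rc cc by (simp add: u_def v_def)
        also have "\<dots> = inv (R j) \<otimes> R k"
          using True j Rc[of j] Rc[of k] cc by (simp add: inv_mult_group m_assoc) (simp add: m_assoc[symmetric])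
        also have "\<dots> = h k"
          using Rk True j Rc[of j] h by (simp add: m_assoc[symmetric])
        finally show ?thesis using True by simp
      qed
    qed
  qed
  then have "commutator W (u, 1) (v, 0) = (h, 0)" using comm_formula[OF uW vW] by simp
  then show ?thesis using uW vW by blast
qed

lemma comm_prod_car: "set cs \<subseteq> carrier B \<times> carrier B \<Longrightarrow> comm_prod B cs \<in> carrier B"
  by (induction cs) (auto simp: comm_prod_Nil comm_prod_Cons commutator_def)

definition emb where "emb x = (\<lambda>k. if k < p then (if k = p - 1 then x else \<one>) else undefined, 0::nat)"

lemma emb_car: "x \<in> carrier B \<Longrightarrow> emb x \<in> carrier W"
  using p2 by (auto simp: emb_def memW)

lemma emb_mult: "x \<in> carrier B \<Longrightarrow> y \<in> carrier B \<Longrightarrow> emb (x \<otimes> y) = emb x \<otimes>\<^bsub>W\<^esub> emb y"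
  by (simp add: emb_def multW sh0 fun_eq_iff)

lemma emb_one: "emb \<one> = \<one>\<^bsub>W\<^esub>"
  by (simp add: emb_def oneW fun_eq_iff)

lemma emb_inv: "x \<in> carrier B \<Longrightarrow> inv\<^bsub>W\<^esub> (emb x) = emb (inv x)"
proof -
  interpret Wg: group W by (rule groupW)
  assume x: "x \<in> carrier B"
  have "emb (inv x) \<otimes>\<^bsub>W\<^esub> emb x = \<one>\<^bsub>W\<^esub>" using x by (simp add: emb_mult[symmetric] emb_one)
  then show ?thesis using x by (intro Wg.inv_equality) (auto simp: emb_car)
qed

lemma emb_comm: "a \<in> carrier B \<Longrightarrow> b \<in> carrier B \<Longrightarrow> commutator W (emb a) (emb b) = emb (commutator B a b)"
  by (simp add: commutator_def emb_inv emb_mult emb_car)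

lemma emb_comm_prod: "set cs \<subseteq> carrier B \<times> carrier B \<Longrightarrow>
   comm_prod W (map (\<lambda>(a, b). (emb a, emb b)) cs) = emb (comm_prod B cs)"
proof (induction cs)
  case Nil then show ?case by (simp add: comm_prod_Nil emb_one)
next
  case (Cons x cs)
  obtain a b where x: "x = (a, b)" by (cases x)
  have ab: "a \<in> carrier B" "b \<in> carrier B" using Cons.prems x by auto
  have cs: "set cs \<subseteq> carrier B \<times> carrier B" using Cons.prems by auto
  have cc: "commutator B a b \<in> carrier B" using ab by (simp add: commutator_def)
  show ?case using Cons.IH[OF cs] ab comm_prod_car[OF cs] cc
    by (simp add: x comm_prod_Cons emb_comm emb_mult)
qed

lemma main_wr:
  assumes cwB: "\<forall>g \<in> derived B (carrier B). prod_of_comms B n g"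
    and g: "g \<in> derived W (carrier W)"
  shows "prod_of_comms W (max 1 n) g"
proof -
  obtain f i where gf: "g = (f, i)" by (cases g)
  have gS: "(f, i) \<in> S" using derived_S g gf by auto
  then have i0: "i = 0" and fD: "oprod B f p \<in> D" using S_oprod by auto
  have fc: "\<forall>k<p. f k \<in> carrier B" "\<forall>k. k \<ge> p \<longrightarrow> f k = undefined"
    using gS memW S_def by auto
  obtain cs where cs: "length cs \<le> n" "set cs \<subseteq> carrier B \<times> carrier B" "oprod B f p = comm_prod B cs"
    using cwB fD unfolding D_def prod_of_comms_def by blast
  define cs0 where "cs0 = (if cs = [] then [(\<one>, \<one>)] else cs)"
  have cs0: "length cs0 \<le> max 1 n" "set cs0 \<subseteq> carrier B \<times> carrier B" "oprod B f p = comm_prod B cs0" "cs0 \<noteq> []"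
    using cs by (auto simp: cs0_def comm_prod_Nil comm_prod_Cons commutator_def)
  then obtain a b cs' where cs0e: "cs0 = (a, b) # cs'" by (cases cs0) auto
  have ab: "a \<in> carrier B" "b \<in> carrier B" and cs': "set cs' \<subseteq> carrier B \<times> carrier B"
    using cs0(2) cs0e by auto
  define c' where "c' = comm_prod B cs'"
  have c'c: "c' \<in> carrier B" using comm_prod_car[OF cs'] c'_def by simp
  define h where "h k = (if k < p then (if k = p - 1 then f k \<otimes> inv c' else f k) else undefined)" for k
  have hc: "\<forall>k<p. h k \<in> carrier B" "\<forall>k. k \<ge> p \<longrightarrow> h k = undefined"
    using fc c'c by (auto simp: h_def)
  have pS: "p = Suc (p - 1)" using p2 by simp
  have "oprod B h (p - 1) = oprod B f (p - 1)" by (rule oprod_cong) (auto simp: h_def)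
  moreover have "oprod B h p = oprod B h (p - 1) \<otimes> h (p - 1)" by (metis pS oprod.simps(2))
  moreover have "h (p - 1) = f (p - 1) \<otimes> inv c'" using p2 by (simp add: h_def)
  ultimately have "oprod B h p = oprod B f (p - 1) \<otimes> (f (p - 1) \<otimes> inv c')" by simp
  also have "\<dots> = oprod B f p \<otimes> inv c'"
  proof -
    have "oprod B f p = oprod B f (p - 1) \<otimes> f (p - 1)" by (metis pS oprod.simps(2))
    then show ?thesis using fc c'c p2 oprod_car[of "p - 1" f] by (simp add: m_assoc)
  qed
  also have "\<dots> = commutator B a b"
    using cs0(3) cs0e c'c ab by (simp add: comm_prod_Cons c'_def[symmetric] m_assoc commutator_def)
  finally have hp: "oprod B h p = commutator B a b" .
  obtain X Y where XY: "X \<in> carrier W" "Y \<in> carrier W" "commutator W X Y = (h, 0)"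
    using key[OF hc ab hp] by blast
  have "g = (h, 0) \<otimes>\<^bsub>W\<^esub> emb c'"
    using fc c'c unfolding gf i0 by (auto simp: emb_def h_def multW sh0 fun_eq_iff m_assoc)
  also have "\<dots> = comm_prod W ((X, Y) # map (\<lambda>(a, b). (emb a, emb b)) cs')"
    using XY emb_comm_prod[OF cs'] by (simp add: comm_prod_Cons c'_def)
  finally have ge: "g = comm_prod W ((X, Y) # map (\<lambda>(a, b). (emb a, emb b)) cs')" .
  have "set ((X, Y) # map (\<lambda>(a, b). (emb a, emb b)) cs') \<subseteq> carrier W \<times> carrier W"
    using XY cs' emb_car by auto
  moreover have "length ((X, Y) # map (\<lambda>(a, b). (emb a, emb b)) cs') \<le> max 1 n"
    using cs0(1) cs0e by simp
  ultimately show ?thesis using ge unfolding prod_of_comms_def by (intro exI[of _ "(X, Y) # map (\<lambda>(a, b). (emb a, emb b)) cs'"]) simp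
qed

end

theorem lemma4:
  fixes B :: "('a, 'b) monoid_scheme" and p :: nat
  assumes "group B" and "p \<ge> 2"
  shows "comm_width (wreath_Cp B p) \<le> max 1 (comm_width B)"
proof (cases "comm_width B")
  case infinity then show ?thesis by simp
next
  case (enat n)
  interpret wr B p using assms by (simp add: wr_def wr_axioms_def)
  let ?A = "{enat n | n. \<forall>g \<in> derived B (carrier B). prod_of_comms B n g}"
  have ne: "?A \<noteq> {}"
  proof
    assume e: "?A = {}"
    have "comm_width B = Inf ?A" by (simp add: comm_width_def)
    also have "\<dots> = \<infinity>" unfolding e by (simp add: Inf_enat_def)
    finally show False using enat by simp
  qed
  have IL: "Inf ?A = (LEAST y. y \<in> ?A)" unfolding Inf_enat_def by (rule if_not_P[OF ne])
  obtain x where "x \<in> ?A" using ne by blast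
  then have "(LEAST y. y \<in> ?A) \<in> ?A" by (rule LeastI)
  then have "Inf ?A \<in> ?A" unfolding IL .
  then have cwB: "\<forall>g \<in> derived B (carrier B). prod_of_comms B n g"
    using enat unfolding comm_width_def by auto
  have "\<forall>g \<in> derived W (carrier W). prod_of_comms W (max 1 n) g"
    using main_wr[OF cwB] by blast
  then have "enat (max 1 n) \<in> {enat n | n. \<forall>g \<in> derived W (carrier W). prod_of_comms W n g}"
    by blast
  then have "comm_width W \<le> enat (max 1 n)"
    unfolding comm_width_def by (rule Inf_lower)
  moreover have "max 1 (enat n) = enat (max 1 n)" by (simp add: one_enat_def)
  ultimately show ?thesis using enat by simp
qed

end
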